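(* Let $d=2$, let $\mathcal S$ be the set of $2\times 2$ density operators, and let $\mathrm d\rho$ be a probability measure on $\mathcal S$. Put $\hat\rho=\mathbb E_\rho[\rho]$ and $p_\rho=\mathbb E_\rho\big[\sqrt{1-\mathrm{Tr}(\rho^2)}\big]$. Then $$\max_{\sigma\in\mathcal S}\mathbb E_\rho[F(\rho,\sigma)]=\frac12\left(1+\sqrt{2\big(p_\rho^2+\mathrm{Tr}(\hat\rho^2)\big)-1}\right),$$ and, whenever $2(p_\rho^2+\mathrm{Tr}(\hat\rho^2))-1>0$, the operator $$\sigma^\sharp=\tfrac12\mathbb 1+\sqrt{\frac{1}{2(p_\rho^2+\mathrm{Tr}(\hat\rho^2))-1}}\Big(\hat\rho-\tfrac12\mathbb 1\Big)$$ is a density operator attaining this maximum.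
   Context: The fidelity of $\rho,\sigma\in\mathcal S$ is $F(\rho,\sigma)=\big[\mathrm{Tr}\sqrt{\sqrt\rho\,\sigma\sqrt\rho}\big]^2$. $\mathbb E_\rho$ denotes expectation with respect to $\mathrm d\rho$; $\mathbb 1$ is the $2\times2$ identity. *)

theory Defs
  imports "HOL-Analysis.Analysis" "HOL-Probability.Probability"
begin

type_synonym cmat2 = "complex^2^2"

definition adj :: "cmat2 \<Rightarrow> cmat2" where
  "adj A = (\<chi> i j. cnj (A $ j $ i))"

definition hermitian :: "cmat2 \<Rightarrow> bool" where
  "hermitian A \<longleftrightarrow> adj A = A"

definition psd :: "cmat2 \<Rightarrow> bool" where
  "psd A \<longleftrightarrow> hermitian A \<and>
     (\<forall>x::complex^2. Im (\<Sum>i\<in>UNIV. cnj (x $ i) * (A *v x) $ i) = 0 \<and>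
                      Re (\<Sum>i\<in>UNIV. cnj (x $ i) * (A *v x) $ i) \<ge> 0)"

definition density_op :: "cmat2 \<Rightarrow> bool" where
  "density_op A \<longleftrightarrow> psd A \<and> trace A = 1"

definition msqrt :: "cmat2 \<Rightarrow> cmat2" where
  "msqrt A = (THE B. psd B \<and> B ** B = A)"

definition fidelity :: "cmat2 \<Rightarrow> cmat2 \<Rightarrow> real" where
  "fidelity \<rho> \<sigma> = (Re (trace (msqrt (msqrt \<rho> ** \<sigma> ** msqrt \<rho>))))\<^sup>2"

end

theory Submission imports Defs begin

lemma hermitian_iff: "hermitian A \<longleftrightarrow> Im (A$1$1) = 0 \<and> Im (A$2$2) = 0 \<and> A$2$1 = cnj (A$1$2)"
  unfolding hermitian_def adj_def vec_eq_iff forall_2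
  by (auto simp: complex_eq_iff)

lemma qform2: fixes A :: cmat2 and x :: "complex^2" shows "(\<Sum>i\<in>UNIV. cnj (x $ i) * (A *v x) $ i) =
   cnj(x$1)*(A$1$1*x$1 + A$1$2*x$2) + cnj(x$2)*(A$2$1*x$1+A$2$2*x$2)"
  by (simp add: sum_2 matrix_vector_mult_def)

lemma real_quad:
  fixes a c b1 b2 p1 q1 p2 q2 :: real
  assumes "a \<ge> 0" "c \<ge> 0" "b1^2 + b2^2 \<le> a*c"
  shows "0 \<le> a*(p1^2+q1^2) + c*(p2^2+q2^2) + 2*(p1*(b1*p2 - b2*q2) + q1*(b1*q2 + b2*p2))"
proof (cases "a = 0")
  case True
  then have "b1^2 + b2^2 \<le> 0" using assms by simp
  then have "b1 = 0 \<and> b2 = 0" by (simp add: sum_power2_le_zero_iff)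
  then show ?thesis using True assms by simp
next
  case False
  then have a: "a > 0" using assms by simp
  have "a * (a*(p1^2+q1^2) + c*(p2^2+q2^2) + 2*(p1*(b1*p2 - b2*q2) + q1*(b1*q2 + b2*p2)))
     = (a*p1 + b1*p2 - b2*q2)^2 + (a*q1 + b1*q2 + b2*p2)^2 + (a*c - b1^2 - b2^2)*(p2^2+q2^2)"
    by (simp add: algebra_simps power2_eq_square)
  also have "\<dots> \<ge> 0" using assms by (intro add_nonneg_nonneg mult_nonneg_nonneg) auto
  finally show ?thesis using a by (simp add: zero_le_mult_iff)
qed

lemma psd_iff: "psd A \<longleftrightarrow> hermitian A \<and> Re (A$1$1) \<ge> 0 \<and> Re (A$2$2) \<ge> 0 \<and>
    (cmod (A$1$2))^2 \<le> Re (A$1$1) * Re (A$2$2)"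
proof
  assume H: "hermitian A \<and> Re (A$1$1) \<ge> 0 \<and> Re (A$2$2) \<ge> 0 \<and>
    (cmod (A$1$2))^2 \<le> Re (A$1$1) * Re (A$2$2)"
  then have h: "Im (A$1$1) = 0" "Im (A$2$2) = 0" "A$2$1 = cnj (A$1$2)" using hermitian_iff by auto
  show "psd A" unfolding psd_def
  proof (intro conjI allI)
    show "hermitian A" using H by simp
    fix x :: "complex^2"
    show "Im (\<Sum>i\<in>UNIV. cnj (x $ i) * (A *v x) $ i) = 0"
      unfolding qform2 using h by (simp add: algebra_simps)
    have "0 \<le> Re (A$1$1)*((Re (x$1))^2+(Im (x$1))^2) + Re (A$2$2)*((Re (x$2))^2+(Im (x$2))^2)
       + 2*(Re (x$1)*(Re (A$1$2)*Re (x$2) - Im (A$1$2)*Im (x$2)) + Im (x$1)*(Re (A$1$2)*Im (x$2) + Im (A$1$2)*Re (x$2)))"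
      using H by (intro real_quad) (auto simp: cmod_power2)
    then show "0 \<le> Re (\<Sum>i\<in>UNIV. cnj (x $ i) * (A *v x) $ i)"
      unfolding qform2 using h by (simp add: algebra_simps power2_eq_square)
  qed
next
  assume P: "psd A"
  then have hA: "hermitian A" by (simp add: psd_def)
  then have h: "Im (A$1$1) = 0" "Im (A$2$2) = 0" "A$2$1 = cnj (A$1$2)" using hermitian_iff by auto
  have Q: "\<And>x::complex^2. 0 \<le> Re (cnj(x$1)*(A$1$1*x$1 + A$1$2*x$2) + cnj(x$2)*(A$2$1*x$1+A$2$2*x$2))"
    using P unfolding psd_def qform2 by blast
  define a where "a = Re (A$1$1)"
  define c where "c = Re (A$2$2)"
  define b where "b = A$1$2"
  have A11: "A$1$1 = complex_of_real a" using h by (simp add: a_def complex_eq_iff)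
  have A22: "A$2$2 = complex_of_real c" using h by (simp add: c_def complex_eq_iff)
  have A21: "A$2$1 = cnj b" using h by (simp add: b_def)
  have Q': "\<And>(x1::complex) (x2::complex). 0 \<le> Re (cnj x1 * (a*x1 + b*x2) + cnj x2*(cnj b*x1 + c*x2))"
  proof -
    fix x1 x2 :: complex
    show "0 \<le> Re (cnj x1 * (a*x1 + b*x2) + cnj x2*(cnj b*x1 + c*x2))"
      using Q[of "\<chi> i. if i = 1 then x1 else x2"] by (simp add: A11 A22 A21 b_def)
  qed
  have a0: "a \<ge> 0" using Q'[of 1 0] by simp
  have c0: "c \<ge> 0" using Q'[of 0 1] by simp
  have "(Re b)^2 + (Im b)^2 \<le> a * c"
  proof (cases "a > 0")
    case True
    have "0 \<le> Re (cnj (-b) * (a*(-b) + b*a) + cnj a*(cnj b*(-b) + c*a))"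
      using Q'[of "-b" "complex_of_real a"] by simp
    then have "0 \<le> a * (a*c - ((Re b)^2 + (Im b)^2))"
      by (simp add: algebra_simps power2_eq_square)
    then show ?thesis using True by (simp add: zero_le_mult_iff)
  next
    case False
    then have "a = 0" using a0 by simp
    have "0 \<le> Re (cnj (-b) * (a*(-b) + b*1) + cnj 1*(cnj b*(-b) + c*1))"
      using Q'[of "-b" 1] by simp
    then have "0 \<le> c - 2 * ((Re b)^2 + (Im b)^2)" using \<open>a = 0\<close>
      by (simp add: algebra_simps power2_eq_square)
    have "((Re b)^2 + (Im b)^2) \<le> 0"
    proof (rule ccontr)
      assume "\<not> ((Re b)^2 + (Im b)^2) \<le> 0"
      then have S: "(Re b)^2 + (Im b)^2 > 0" by simp
      define t where "t = (c+1) / ((Re b)^2 + (Im b)^2)"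
      have gen: "\<And>S::real. S > 0 \<Longrightarrow> ((c+1)/S) * S = c+1" by simp
      have tS: "t * ((Re b)^2 + (Im b)^2) = c + 1" unfolding t_def by (rule gen[OF S])
      have "0 \<le> Re (cnj (-b*t) * (a*(-b*t) + b*1) + cnj 1*(cnj b*(-b*t) + c*1))"
        using Q'[of "-b*complex_of_real t" 1] by simp
      then have "0 \<le> c - 2 * (t * ((Re b)^2 + (Im b)^2))" using \<open>a = 0\<close>
        by (simp add: algebra_simps power2_eq_square)
      then show False using tS c0 by simp
    qed
    then show ?thesis using \<open>a = 0\<close> by simp
  qed
  then have "(cmod b)^2 \<le> a * c" by (simp add: cmod_power2)
  then show "hermitian A \<and> Re (A$1$1) \<ge> 0 \<and> Re (A$2$2) \<ge> 0 \<and>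
    (cmod (A$1$2))^2 \<le> Re (A$1$1) * Re (A$2$2)"
    using hA a0 c0 by (simp add: a_def c_def b_def)
qed


lemma cmod_sq': "cmod b * cmod b = Re b * Re b + Im b * Im b"
  by (metis cmod_power2 power2_eq_square)

definition mk :: "real \<Rightarrow> complex \<Rightarrow> real \<Rightarrow> cmat2" where
  "mk a b c = (\<chi> i j. if i = 1 then (if j = 1 then complex_of_real a else b)
                          else (if j = 1 then cnj b else complex_of_real c))"

lemma mk_nth[simp]: "mk a b c $ 1 $ 1 = a" "mk a b c $ 1 $ 2 = b"
  "mk a b c $ 2 $ 1 = cnj b" "mk a b c $ 2 $ 2 = c"
  by (simp_all add: mk_def)

lemma mk_eq_iff: "mk a b c = mk a' b' c' \<longleftrightarrow> a = a' \<and> b = b' \<and> c = c'"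
  by (auto simp: vec_eq_iff forall_2)

lemma hermitian_mk: "hermitian A \<Longrightarrow> A = mk (Re (A$1$1)) (A$1$2) (Re (A$2$2))"
  by (auto simp: hermitian_iff vec_eq_iff forall_2 complex_eq_iff)

lemma hermitian_mk'[simp]: "hermitian (mk a b c)"
  by (simp add: hermitian_iff)

lemma psd_mk: "psd (mk a b c) \<longleftrightarrow> a \<ge> 0 \<and> c \<ge> 0 \<and> (cmod b)^2 \<le> a * c"
  by (simp add: psd_iff)

lemma trace_mk: "trace (mk a b c) = complex_of_real (a + c)"
  by (simp add: trace_def sum_2)

lemma det_mk: "det (mk a b c) = complex_of_real (a * c - (cmod b)^2)"
  by (simp add: det_2 complex_eq_iff cmod_power2 power2_eq_square cmod_sq')

lemma sq_mk: "mk a b c ** mk a b c = mk (a^2 + (cmod b)^2) (complex_of_real (a + c) * b) (c^2 + (cmod b)^2)"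
  by (simp add: vec_eq_iff forall_2 matrix_matrix_mult_def sum_2 complex_eq_iff cmod_power2 power2_eq_square cmod_sq'
       algebra_simps)

lemma scale_mk: "r *\<^sub>R mk a b c = mk (r * a) (complex_of_real r * b) (r * c)"
  by (auto simp: vec_eq_iff forall_2 complex_eq_iff)

lemma add_mat_mk: "mk a b c + s *\<^sub>R mat 1 = mk (a + s) b (c + s)"
  by (auto simp: vec_eq_iff forall_2 mat_def complex_eq_iff)

lemma mat_half_mk: "(1/2) *\<^sub>R mat 1 = mk (1/2) 0 (1/2)"
  by (auto simp: vec_eq_iff forall_2 mat_def complex_eq_iff)

lemma diff_mk: "mk a b c - mk a' b' c' = mk (a - a') (b - b') (c - c')"
  by (simp add: vec_eq_iff forall_2)

lemma plus_mk: "mk a b c + mk a' b' c' = mk (a + a') (b + b') (c + c')"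
  by (simp add: vec_eq_iff forall_2)


lemma ofreal_cancel:
  assumes "x \<noteq> 0" shows "complex_of_real (1/x) * (complex_of_real x * q) = q"
proof -
  have "complex_of_real (1/x) * complex_of_real x = 1" using assms by (simp flip: of_real_mult)
  then show ?thesis by (metis mult.assoc mult_1_left)
qed

definition sqf :: "cmat2 \<Rightarrow> cmat2" where
  "sqf X = (1 / sqrt (Re (trace X) + 2 * sqrt (Re (det X)))) *\<^sub>R (X + sqrt (Re (det X)) *\<^sub>R mat 1)"

lemma sqf_mk: "sqf (mk a b c) =
   (let s = sqrt (a * c - (cmod b)^2); t = sqrt (a + c + 2 * s) in
    mk ((a + s) / t) (complex_of_real (1/t) * b) ((c + s) / t))"
  by (simp add: sqf_def Let_def trace_mk det_mk add_mat_mk scale_mk)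

lemma cmod_ofreal_mult: "(cmod (complex_of_real r * b))^2 = r^2 * (cmod b)^2"
  by (simp add: norm_mult power_mult_distrib)

lemma sqf_psd:
  assumes "psd X"
  shows "psd (sqf X) \<and> sqf X ** sqf X = X"
proof -
  have X: "X = mk (Re (X$1$1)) (X$1$2) (Re (X$2$2))"
    using assms by (intro hermitian_mk) (simp add: psd_def)
  define a where "a = Re (X$1$1)"
  define b where "b = X$1$2"
  define c where "c = Re (X$2$2)"
  have X': "X = mk a b c" using X by (simp add: a_def b_def c_def)
  have P: "psd (mk a b c)" using assms X' by simp
  then have "a \<ge> 0 \<and> c \<ge> 0 \<and> (cmod b)^2 \<le> a * c" by (simp only: psd_mk)
  then have a0: "a \<ge> 0" and c0: "c \<ge> 0" and bac: "(cmod b)^2 \<le> a * c" by blast+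
  define s where "s = sqrt (a * c - (cmod b)^2)"
  define t where "t = sqrt (a + c + 2 * s)"
  have s0: "s \<ge> 0" using bac by (simp add: s_def)
  have ss: "s^2 = a * c - (cmod b)^2" using bac by (simp add: s_def)
  have t0: "t \<ge> 0" using a0 c0 s0 by (simp add: t_def)
  have tt: "t^2 = a + c + 2 * s" using a0 c0 s0 by (simp add: t_def)
  have S: "sqf X = mk ((a + s) / t) (complex_of_real (1/t) * b) ((c + s) / t)"
    unfolding X' sqf_mk by (simp add: Let_def s_def t_def)
  show ?thesis
  proof (cases "t = 0")
    case True
    then have "a + c + 2 * s = 0" using tt by simp
    then have "a = 0" "c = 0" "s = 0" using a0 c0 s0 by linarith+
    then have "b = 0" using bac by simp
    have "sqf X = mk 0 0 0" using S True by simp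
    then show ?thesis using \<open>a = 0\<close> \<open>c = 0\<close> \<open>b = 0\<close>
      by (simp add: psd_mk sq_mk X')
  next
    case False
    then have tp: "t > 0" using t0 by simp
    have cb: "(cmod (complex_of_real (1/t) * b))^2 = (cmod b)^2 / t^2"
      by (simp only: cmod_ofreal_mult) (simp add: power_divide)
    have psd1: "(cmod (complex_of_real (1/t) * b))^2 \<le> ((a + s) / t) * ((c + s) / t)"
    proof -
      have "(cmod b)^2 \<le> (a + s) * (c + s)"
        using bac a0 c0 s0 by (smt (verit) mult_nonneg_nonneg distrib_left distrib_right)
      then have "(cmod b)^2 / t^2 \<le> (a + s) * (c + s) / t^2"
        by (simp add: divide_right_mono)
      moreover have "(cmod (complex_of_real (1/t) * b))^2 = (cmod b)^2 / t^2"
        by (simp only: cmod_ofreal_mult) (simp add: power_divide)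
      moreover have "((a + s) / t) * ((c + s) / t) = (a + s) * (c + s) / t^2"
        by (simp add: power2_eq_square)
      ultimately show ?thesis by linarith
    qed
    have e1: "((a + s) / t)^2 + (cmod (complex_of_real (1/t) * b))^2 = a"
    proof -
      have "(a + s)^2 + (cmod b)^2 = a * t^2" using ss tt by (simp add: algebra_simps power2_eq_square)
      then have "((a + s)^2 + (cmod b)^2) / t^2 = a" using tp by simp
      then show ?thesis unfolding cb power_divide by (simp add: add_divide_distrib)
    qed
    have e2: "((c + s) / t)^2 + (cmod (complex_of_real (1/t) * b))^2 = c"
    proof -
      have "(c + s)^2 + (cmod b)^2 = c * t^2" using ss tt by (simp add: algebra_simps power2_eq_square)
      then have "((c + s)^2 + (cmod b)^2) / t^2 = c" using tp by simp
      then show ?thesis unfolding cb power_divide by (simp add: add_divide_distrib)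
    qed
    have e3: "complex_of_real ((a + s) / t + (c + s) / t) * (complex_of_real (1/t) * b) = b"
    proof -
      have "(a + s) / t + (c + s) / t = (a + c + 2 * s) / t" using tp by (simp add: field_simps)
      also have "\<dots> = t^2 / t" using tt by simp
      also have "\<dots> = t" using tp by (simp add: power2_eq_square)
      finally have "(a + s) / t + (c + s) / t = t" .
      then show ?thesis using tp by (simp add: mult.assoc[symmetric] of_real_mult[symmetric] del: of_real_mult)
    qed
    show ?thesis unfolding S
      apply (subst sq_mk)
      using psd1 a0 c0 s0 tp e1 e2 e3 by (simp add: psd_mk X')
  qed
qed

lemma sqf_unique:
  assumes "psd B"
  shows "sqf (B ** B) = B"
proof -
  have B: "B = mk (Re (B$1$1)) (B$1$2) (Re (B$2$2))"
    using assms by (intro hermitian_mk) (simp add: psd_def)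
  define p where "p = Re (B$1$1)"
  define q where "q = B$1$2"
  define r where "r = Re (B$2$2)"
  have B': "B = mk p q r" using B by (simp add: p_def q_def r_def)
  have P: "psd (mk p q r)" using assms B' by simp
  then have "p \<ge> 0 \<and> r \<ge> 0 \<and> (cmod q)^2 \<le> p * r" by (simp only: psd_mk)
  then have p0: "p \<ge> 0" and r0: "r \<ge> 0" and qpr: "(cmod q)^2 \<le> p * r" by blast+
  have d: "(p^2 + (cmod q)^2) * (r^2 + (cmod q)^2) - (cmod (complex_of_real (p + r) * q))^2
          = (p * r - (cmod q)^2)^2"
    by (simp only: cmod_ofreal_mult) (simp add: algebra_simps power2_eq_square)
  have s: "sqrt ((p^2 + (cmod q)^2) * (r^2 + (cmod q)^2) - (cmod (complex_of_real (p + r) * q))^2)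
          = p * r - (cmod q)^2"
    unfolding d using qpr by simp
  have t: "sqrt (p^2 + (cmod q)^2 + (r^2 + (cmod q)^2) + 2 * (p * r - (cmod q)^2)) = p + r"
  proof -
    have "p^2 + (cmod q)^2 + (r^2 + (cmod q)^2) + 2 * (p * r - (cmod q)^2) = (p + r)^2"
      by (simp add: algebra_simps power2_eq_square)
    then show ?thesis using p0 r0 by simp
  qed
  show ?thesis
  proof (cases "p + r = 0")
    case True
    then have "p = 0" "r = 0" using p0 r0 by linarith+
    then have "q = 0" using qpr by simp
    then show ?thesis unfolding B' sq_mk sqf_mk Let_def s t using \<open>p = 0\<close> \<open>r = 0\<close>
      by simp
  next
    case False
    then have pr: "p + r > 0" using p0 r0 by simp
    have e1: "(p^2 + (cmod q)^2 + (p * r - (cmod q)^2)) / (p + r) = p"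
      using pr by (simp add: field_simps power2_eq_square)
    have e2: "(r^2 + (cmod q)^2 + (p * r - (cmod q)^2)) / (p + r) = r"
      using pr by (simp add: field_simps power2_eq_square)
    have e3: "complex_of_real (1 / (p + r)) * (complex_of_real (p + r) * q) = q"
      using pr by (intro ofreal_cancel) simp
    show ?thesis unfolding B' sq_mk sqf_mk Let_def s t using e1 e2 e3 by simp
  qed
qed

lemma msqrt_eq:
  assumes "psd X"
  shows "msqrt X = sqf X"
  unfolding msqrt_def
proof (rule the_equality)
  show "psd (sqf X) \<and> sqf X ** sqf X = X" using sqf_psd[OF assms] .
  fix B assume "psd B \<and> B ** B = X"
  then show "B = sqf X" using sqf_unique by metis
qed


lemma trace_sqf:
  assumes "psd X"
  shows "Re (trace (sqf X)) = sqrt (Re (trace X) + 2 * sqrt (Re (det X)))"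
proof -
  have X: "X = mk (Re (X$1$1)) (X$1$2) (Re (X$2$2))"
    using assms by (intro hermitian_mk) (simp add: psd_def)
  define a where "a = Re (X$1$1)"
  define b where "b = X$1$2"
  define c where "c = Re (X$2$2)"
  have X': "X = mk a b c" using X by (simp add: a_def b_def c_def)
  have P: "psd (mk a b c)" using assms X' by simp
  then have "a \<ge> 0 \<and> c \<ge> 0 \<and> (cmod b)^2 \<le> a * c" by (simp only: psd_mk)
  then have a0: "a \<ge> 0" and c0: "c \<ge> 0" and bac: "(cmod b)^2 \<le> a * c" by blast+
  define s where "s = sqrt (a * c - (cmod b)^2)"
  define t where "t = sqrt (a + c + 2 * s)"
  have s0: "s \<ge> 0" using bac by (simp add: s_def)
  have t0: "t \<ge> 0" using a0 c0 s0 by (simp add: t_def)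
  have tt: "t^2 = a + c + 2 * s" using a0 c0 s0 by (simp add: t_def)
  have S: "sqf X = mk ((a + s) / t) (complex_of_real (1/t) * b) ((c + s) / t)"
    unfolding X' sqf_mk by (simp add: Let_def s_def t_def)
  have "Re (trace (sqf X)) = (a + s) / t + (c + s) / t" unfolding S trace_mk by simp
  also have "\<dots> = t"
  proof (cases "t = 0")
    case True then show ?thesis by simp
  next
    case False
    then have tp: "t > 0" using t0 by simp
    have "(a + s) / t + (c + s) / t = (a + c + 2 * s) / t" using tp by (simp add: field_simps)
    also have "\<dots> = t^2 / t" using tt by simp
    also have "\<dots> = t" using tp by (simp add: power2_eq_square)
    finally show ?thesis .
  qed
  finally show ?thesis unfolding t_def s_def X' trace_mk det_mk by simp
qed

lemma adj_mult: "adj (A ** B) = adj B ** adj A"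
  by (simp add: adj_def vec_eq_iff forall_2 matrix_matrix_mult_def sum_2 mult.commute)

lemma herm_inner:
  assumes "hermitian R"
  shows "(\<Sum>i\<in>UNIV. cnj (x $ i) * (R *v z) $ i) = (\<Sum>i\<in>UNIV. cnj ((R *v x) $ i) * z $ i)"
proof -
  have R: "R = mk (Re (R$1$1)) (R$1$2) (Re (R$2$2))" using assms by (rule hermitian_mk)
  show ?thesis
    by (subst (1 2) R) (simp add: sum_2 matrix_vector_mult_def algebra_simps)
qed

lemma psd_sandwich:
  assumes "hermitian R" "psd S"
  shows "psd (R ** S ** R)"
  unfolding psd_def
proof (intro conjI allI)
  show "hermitian (R ** S ** R)"
    using assms unfolding hermitian_def psd_def by (simp add: adj_mult matrix_mul_assoc)
  fix x :: "complex^2"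
  have "(\<Sum>i\<in>UNIV. cnj (x $ i) * ((R ** S ** R) *v x) $ i)
      = (\<Sum>i\<in>UNIV. cnj ((R *v x) $ i) * (S *v (R *v x)) $ i)"
    unfolding matrix_vector_mul_assoc[symmetric] using herm_inner[OF assms(1)] by simp
  then show "Im (\<Sum>i\<in>UNIV. cnj (x $ i) * ((R ** S ** R) *v x) $ i) = 0"
     "0 \<le> Re (\<Sum>i\<in>UNIV. cnj (x $ i) * ((R ** S ** R) *v x) $ i)"
    using assms(2) unfolding psd_def by simp_all
qed

definition wf :: "cmat2 \<Rightarrow> real" where
  "wf A = sqrt (1 - Re (trace (A ** A)))"

lemma density_mk:
  assumes "density_op A"
  obtains a b c where "A = mk a b c" "a \<ge> 0" "c \<ge> 0" "(cmod b)^2 \<le> a * c" "a + c = 1"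
proof -
  have X: "A = mk (Re (A$1$1)) (A$1$2) (Re (A$2$2))"
    using assms by (intro hermitian_mk) (simp add: psd_def density_op_def)
  define a where "a = Re (A$1$1)"
  define b where "b = A$1$2"
  define c where "c = Re (A$2$2)"
  have X': "A = mk a b c" using X by (simp add: a_def b_def c_def)
  have P: "psd (mk a b c)" using assms X' by (simp add: density_op_def)
  then have "a \<ge> 0 \<and> c \<ge> 0 \<and> (cmod b)^2 \<le> a * c" by (simp only: psd_mk)
  moreover have "trace (mk a b c) = 1" using assms X' by (simp add: density_op_def)
  then have "a + c = 1" unfolding trace_mk by (simp add: complex_eq_iff)
  ultimately show ?thesis using that X' by blast
qed

lemma wf_mk: "a + c = 1 \<Longrightarrow> wf (mk a b c) = sqrt 2 * sqrt (a * c - (cmod b)^2)"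
proof -
  assume ac: "a + c = 1"
  have "1 - Re (trace (mk a b c ** mk a b c)) = 2 * (a * c - (cmod b)^2)"
  proof -
    have "1 = (a + c)^2" using ac by simp
    then show ?thesis unfolding sq_mk trace_mk by (simp add: algebra_simps power2_eq_square)
  qed
  then have "wf (mk a b c) = sqrt (2 * (a * c - (cmod b)^2))" unfolding wf_def by (simp only:)
  then show ?thesis by (simp only: real_sqrt_mult)
qed

lemma fid_formula:
  assumes "density_op \<rho>" "density_op \<sigma>"
  shows "fidelity \<rho> \<sigma> = Re (trace (\<rho> ** \<sigma>)) + wf \<rho> * wf \<sigma>"
proof -
  have pr: "psd \<rho>" and ps: "psd \<sigma>" using assms by (simp_all add: density_op_def)
  define R where "R = msqrt \<rho>"
  have R: "psd R" "R ** R = \<rho>" using sqf_psd[OF pr] msqrt_eq[OF pr] by (simp_all add: R_def)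
  have hR: "hermitian R" using R by (simp add: psd_def)
  define X where "X = R ** \<sigma> ** R"
  have pX: "psd X" unfolding X_def by (rule psd_sandwich[OF hR ps])
  have trX: "trace X = trace (\<rho> ** \<sigma>)"
    unfolding X_def by (metis R(2) matrix_mul_assoc trace_mul_sym)
  have detX: "det X = det \<rho> * det \<sigma>"
    unfolding X_def by (metis R(2) det_mul mult.commute mult.left_commute)
  obtain a1 b1 c1 where r: "\<rho> = mk a1 b1 c1" "a1 \<ge> 0" "c1 \<ge> 0" "(cmod b1)^2 \<le> a1 * c1" "a1 + c1 = 1"
    using density_mk[OF assms(1)] by blast
  obtain a2 b2 c2 where s: "\<sigma> = mk a2 b2 c2" "a2 \<ge> 0" "c2 \<ge> 0" "(cmod b2)^2 \<le> a2 * c2" "a2 + c2 = 1"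
    using density_mk[OF assms(2)] by blast
  define d1 where "d1 = a1 * c1 - (cmod b1)^2"
  define d2 where "d2 = a2 * c2 - (cmod b2)^2"
  have d10: "d1 \<ge> 0" "d2 \<ge> 0" using r s by (simp_all add: d1_def d2_def)
  have ReDet: "Re (det X) = d1 * d2" unfolding detX r(1) s(1) det_mk d1_def d2_def
    by (simp flip: of_real_mult)
  have w: "wf \<rho> * wf \<sigma> = 2 * sqrt (d1 * d2)"
    unfolding r(1) s(1) wf_mk[OF r(5)] wf_mk[OF s(5)] d1_def[symmetric] d2_def[symmetric]
    by (simp add: real_sqrt_mult)
  have trnn: "Re (trace X) \<ge> 0"
  proof -
    have "Re (trace X) = Re (X$1$1) + Re (X$2$2)" by (simp add: trace_def sum_2)
    then show ?thesis using pX by (simp add: psd_iff)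
  qed
  have "fidelity \<rho> \<sigma> = (Re (trace (sqf X)))^2"
    unfolding fidelity_def R_def[symmetric] X_def[symmetric] msqrt_eq[OF pX] ..
  also have "\<dots> = Re (trace X) + 2 * sqrt (Re (det X))"
    unfolding trace_sqf[OF pX] using trnn ReDet d10 by simp
  finally show ?thesis unfolding trX ReDet w .
qed


lemma mat1_mk: "(mat 1 :: cmat2) = mk 1 0 1"
  by (simp add: vec_eq_iff forall_2 mat_def)

lemma psd_sq: "psd B \<Longrightarrow> psd (B ** B)"
proof -
  assume "psd B"
  moreover have "psd (mat 1::cmat2)" by (simp add: mat1_mk psd_mk)
  ultimately have "psd (B ** mat 1 ** B)"
    by (intro psd_sandwich) (auto simp: psd_def)
  then show ?thesis by (simp add: matrix_mul_rid)
qed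

lemma msqrt_alt: "msqrt A = (if psd A then sqf A else The (\<lambda>B::cmat2. False))"
proof (cases "psd A")
  case True then show ?thesis by (simp add: msqrt_eq)
next
  case False
  have "(\<lambda>B. psd B \<and> B ** B = A) = (\<lambda>B. False)"
    using False psd_sq by auto
  then show ?thesis using False by (simp add: msqrt_def)
qed

lemma psd_closed: "closed {A::cmat2. psd A}"
  unfolding psd_iff hermitian_iff
  by (intro closed_Collect_conj closed_Collect_eq closed_Collect_le continuous_intros)

lemma cont_det: "continuous_on UNIV (\<lambda>X::cmat2. Re (det X))"
  unfolding det_2 by (intro continuous_intros)

lemma cont_trace: "continuous_on UNIV (\<lambda>X::cmat2. Re (trace X))"
  unfolding trace_def sum_2 by (intro continuous_intros)

lemma sqf_meas: "sqf \<in> borel_measurable borel"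
proof -
  have c1: "(\<lambda>X::cmat2. sqrt (Re (det X))) \<in> borel_measurable borel"
    by (intro borel_measurable_continuous_onI continuous_intros cont_det)
  have c2: "(\<lambda>X::cmat2. Re (trace X)) \<in> borel_measurable borel"
    by (intro borel_measurable_continuous_onI cont_trace)
  have c3: "(\<lambda>X::cmat2. 1 / sqrt (Re (trace X) + 2 * sqrt (Re (det X)))) \<in> borel_measurable borel"
    using c1 c2 by measurable
  have c4: "(\<lambda>X::cmat2. X + sqrt (Re (det X)) *\<^sub>R mat 1) \<in> borel_measurable borel"
    using c1 by measurable
  have "(\<lambda>X::cmat2. (1 / sqrt (Re (trace X) + 2 * sqrt (Re (det X)))) *\<^sub>R (X + sqrt (Re (det X)) *\<^sub>R mat 1))
        \<in> borel_measurable borel"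
    using c3 c4 by (rule borel_measurable_scaleR)
  then show ?thesis unfolding sqf_def[abs_def] .
qed

lemma msqrt_meas: "msqrt \<in> borel_measurable borel"
proof -
  have "(\<lambda>A. if psd A then sqf A else The (\<lambda>B::cmat2. False)) \<in> borel_measurable borel"
  proof (intro measurable_If sqf_meas measurable_const)
    have e: "{A \<in> space borel. psd A} = {A::cmat2. psd A}" by simp
    show "{A \<in> space borel. psd A} \<in> sets (borel :: cmat2 measure)"
      unfolding e by (rule borel_closed[OF psd_closed])
  qed simp
  then show ?thesis unfolding msqrt_alt[abs_def] .
qed

lemma cont_sand: "continuous_on UNIV (\<lambda>B::cmat2. B ** S ** B)"
  unfolding matrix_matrix_mult_def by (intro continuous_intros)

lemma fid_meas: "(\<lambda>\<rho>. fidelity \<rho> \<sigma>) \<in> borel_measurable borel"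
proof -
  have h: "(\<lambda>X::cmat2. (Re (trace X))^2) \<in> borel_measurable borel"
    by (intro borel_measurable_continuous_onI continuous_intros cont_trace)
  have g: "(\<lambda>B::cmat2. B ** \<sigma> ** B) \<in> borel_measurable borel"
    by (intro borel_measurable_continuous_onI cont_sand)
  have "(\<lambda>\<rho>. (Re (trace (msqrt (msqrt \<rho> ** \<sigma> ** msqrt \<rho>))))^2) \<in> borel_measurable borel"
    by (rule measurable_compose[OF measurable_compose[OF measurable_compose[OF msqrt_meas g] msqrt_meas] h])
  then show ?thesis unfolding fidelity_def .
qed

lemma wf_meas: "wf \<in> borel_measurable borel"
proof -
  have "continuous_on UNIV (\<lambda>A::cmat2. sqrt (1 - Re (trace (A ** A))))"
    unfolding trace_def sum_2 matrix_matrix_mult_def by (intro continuous_intros)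
  then show ?thesis unfolding wf_def[abs_def] by (rule borel_measurable_continuous_onI)
qed

lemma trlin_meas: "(\<lambda>A::cmat2. Re (trace (A ** S))) \<in> borel_measurable borel"
proof -
  have "continuous_on UNIV (\<lambda>A::cmat2. Re (trace (A ** S)))"
    unfolding trace_def sum_2 matrix_matrix_mult_def by (intro continuous_intros)
  then show ?thesis by (rule borel_measurable_continuous_onI)
qed


lemma tr_mk_mk: "Re (trace (mk a b c ** mk a' b' c')) = a*a' + c*c' + 2*(Re b * Re b' + Im b * Im b')"
  by (simp add: trace_def sum_2 matrix_matrix_mult_def)

lemma cs4:
  fixes u1 u2 u3 u4 v1 v2 v3 v4 :: real
  assumes "v1^2 + v2^2 + v3^2 + v4^2 = 1"
  shows "u1 * v1 + u2 * v2 + u3 * v3 + u4 * v4 \<le> sqrt (u1^2 + u2^2 + u3^2 + u4^2)"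
proof -
  define S where "S = u1 * v1 + u2 * v2 + u3 * v3 + u4 * v4"
  have lag: "(u1^2 + u2^2 + u3^2 + u4^2) * (v1^2 + v2^2 + v3^2 + v4^2) - S^2 =
     (u1 * v2 - u2 * v1)^2 + (u1 * v3 - u3 * v1)^2 + (u1 * v4 - u4 * v1)^2 + (u2 * v3 - u3 * v2)^2
     + (u2 * v4 - u4 * v2)^2 + (u3 * v4 - u4 * v3)^2"
    unfolding S_def by (simp add: algebra_simps power2_eq_square)
  have "S^2 \<le> u1^2 + u2^2 + u3^2 + u4^2"
  proof -
    have "0 \<le> (u1 * v2 - u2 * v1)^2 + (u1 * v3 - u3 * v1)^2 + (u1 * v4 - u4 * v1)^2 + (u2 * v3 - u3 * v2)^2
     + (u2 * v4 - u4 * v2)^2 + (u3 * v4 - u4 * v3)^2" by simp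
    moreover have "(u1^2 + u2^2 + u3^2 + u4^2) - S^2 =
     (u1 * v2 - u2 * v1)^2 + (u1 * v3 - u3 * v1)^2 + (u1 * v4 - u4 * v1)^2 + (u2 * v3 - u3 * v2)^2
     + (u2 * v4 - u4 * v2)^2 + (u3 * v4 - u4 * v3)^2" using lag assms by simp
    ultimately show ?thesis by linarith
  qed
  then have "sqrt (S^2) \<le> sqrt (u1^2 + u2^2 + u3^2 + u4^2)" by (rule real_sqrt_le_mono)
  then have "\<bar>S\<bar> \<le> sqrt (u1^2 + u2^2 + u3^2 + u4^2)" by simp
  then show ?thesis unfolding S_def[symmetric] by linarith
qed

lemma final_alg:
  fixes a c p :: real and b :: complex
  assumes ac: "a + c = 1" and p0: "p \<ge> 0"
  defines "H \<equiv> mk a b c"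
  defines "K \<equiv> 2 * (p^2 + Re (trace (H ** H))) - 1"
  shows "density_op \<sigma> \<Longrightarrow> Re (trace (H ** \<sigma>)) + p * wf \<sigma> \<le> (1 + sqrt K)/2"
    and "K > 0 \<Longrightarrow> (let \<sigma>s = (1/2) *\<^sub>R mat 1 + sqrt (1/K) *\<^sub>R (H - (1/2) *\<^sub>R mat 1) in
           density_op \<sigma>s \<and> Re (trace (H ** \<sigma>s)) + p * wf \<sigma>s = (1 + sqrt K)/2)"
    and "\<exists>\<sigma>. density_op \<sigma> \<and> Re (trace (H ** \<sigma>)) + p * wf \<sigma> = (1 + sqrt K)/2"
proof -
  define x where "x = a - c"
  define B where "B = (Re b)^2 + (Im b)^2"
  have cb: "(cmod b)^2 = B" by (simp add: B_def cmod_power2)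
  have B0: "B \<ge> 0" by (simp add: B_def)
  have K: "K = x^2 + 4 * B + 2 * p^2"
  proof -
    have "1 = (a + c)^2" using ac by simp
    then show ?thesis unfolding K_def H_def sq_mk trace_mk x_def cb
      by (simp add: algebra_simps power2_eq_square)
  qed
  have K0: "K \<ge> 0" using K B0 by simp
  show part1: "Re (trace (H ** \<sigma>)) + p * wf \<sigma> \<le> (1 + sqrt K)/2" if ds: "density_op \<sigma>" for \<sigma>
  proof -
    obtain a2 b2 c2 where s: "\<sigma> = mk a2 b2 c2" "a2 \<ge> 0" "c2 \<ge> 0" "(cmod b2)^2 \<le> a2 * c2" "a2 + c2 = 1"
      using density_mk[OF ds] by blast
    define d2 where "d2 = a2 * c2 - (cmod b2)^2"
    have d20: "d2 \<ge> 0" using s by (simp add: d2_def)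
    have w: "wf (mk a2 b2 c2) = sqrt 2 * sqrt d2" unfolding wf_mk[OF s(5)] d2_def ..
    have v: "(a2 - c2)^2 + (2 * Re b2)^2 + (2 * Im b2)^2 + (2 * sqrt d2)^2 = 1"
    proof -
      have "1 = (a2 + c2)^2" using s by simp
      then show ?thesis using d20 unfolding d2_def cmod_power2 by (simp add: algebra_simps power2_eq_square)
    qed
    have "x * (a2 - c2) + (2 * Re b) * (2 * Re b2) + (2 * Im b) * (2 * Im b2) + (sqrt 2 * p) * (2 * sqrt d2)
          \<le> sqrt (x^2 + (2 * Re b)^2 + (2 * Im b)^2 + (sqrt 2 * p)^2)"
      by (rule cs4[OF v])
    also have "x^2 + (2 * Re b)^2 + (2 * Im b)^2 + (sqrt 2 * p)^2 = K"
      unfolding K B_def by (simp add: power_mult_distrib)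
    finally have cs: "x * (a2 - c2) + (2 * Re b) * (2 * Re b2) + (2 * Im b) * (2 * Im b2) + (sqrt 2 * p) * (2 * sqrt d2)
          \<le> sqrt K" .
    have "2 * (Re (trace (H ** \<sigma>)) + p * wf \<sigma>) - 1 =
       x * (a2 - c2) + (2 * Re b) * (2 * Re b2) + (2 * Im b) * (2 * Im b2) + (sqrt 2 * p) * (2 * sqrt d2)"
    proof -
      have "1 = (a + c) * (a2 + c2)" using ac s by simp
      then show ?thesis unfolding H_def s(1) tr_mk_mk w x_def by (simp add: algebra_simps)
    qed
    then show ?thesis using cs by simp
  qed
  show part2: "K > 0 \<Longrightarrow> (let \<sigma>s = (1/2) *\<^sub>R mat 1 + sqrt (1/K) *\<^sub>R (H - (1/2) *\<^sub>R mat 1) in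
           density_op \<sigma>s \<and> Re (trace (H ** \<sigma>s)) + p * wf \<sigma>s = (1 + sqrt K)/2)"
  proof -
    assume Kp: "K > 0"
    define \<tau> where "\<tau> = sqrt (1/K)"
    have t0: "\<tau> \<ge> 0" using Kp by (simp add: \<tau>_def)
    have tK: "\<tau>^2 * K = 1" using Kp by (simp add: \<tau>_def)
    have tK2: "\<tau> * K = sqrt K"
    proof -
      have "\<tau> = 1 / sqrt K" by (simp add: \<tau>_def real_sqrt_divide)
      then have "\<tau> * sqrt K = 1" using Kp by simp
      moreover have "K = sqrt K * sqrt K" using Kp by simp
      ultimately show ?thesis by (metis mult.assoc mult_1)
    qed
    define a2 where "a2 = 1/2 + \<tau> * (a - 1/2)"
    define c2 where "c2 = 1/2 + \<tau> * (c - 1/2)"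
    define b2 where "b2 = complex_of_real \<tau> * b"
    have a2': "a2 = (1 + \<tau> * x) / 2"
    proof -
      have cc: "c = 1 - a" using ac by simp
      show ?thesis unfolding a2_def x_def cc by (simp add: algebra_simps)
    qed
    have c2': "c2 = (1 - \<tau> * x) / 2"
    proof -
      have cc: "c = 1 - a" using ac by simp
      show ?thesis unfolding c2_def x_def cc by (simp add: algebra_simps)
    qed
    have sig: "(1/2) *\<^sub>R mat 1 + \<tau> *\<^sub>R (H - (1/2) *\<^sub>R mat 1) = mk a2 b2 c2"
      unfolding H_def mat_half_mk diff_mk scale_mk plus_mk a2_def b2_def c2_def by simp
    have b2n: "(cmod b2)^2 = \<tau>^2 * B" unfolding b2_def cmod_ofreal_mult cb ..
    have xle: "\<tau>^2 * (x^2 + 4 * B) \<le> 1"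
    proof -
      have "\<tau>^2 * (x^2 + 4 * B) \<le> \<tau>^2 * K" using K by (intro mult_left_mono) auto
      then show ?thesis using tK by simp
    qed
    have "(\<tau> * x)^2 \<le> 1"
    proof -
      have "\<tau>^2 * x^2 \<le> \<tau>^2 * (x^2 + 4 * B)" using B0 by (intro mult_left_mono) auto
      then show ?thesis using xle by (simp add: power_mult_distrib)
    qed
    then have "\<bar>\<tau> * x\<bar> \<le> 1" by (simp add: abs_square_le_1)
    then have a20: "a2 \<ge> 0" and c20: "c2 \<ge> 0" unfolding a2' c2' by auto
    have d2x: "4 * (a2 * c2 - (cmod b2)^2) = 1 - \<tau>^2 * (x^2 + 4 * B)"
      unfolding a2' c2' b2n by (simp add: field_simps power2_eq_square | simp add: divide_simps algebra_simps power2_eq_square)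
    have d2: "a2 * c2 - (cmod b2)^2 = (1 - \<tau>^2 * (x^2 + 4 * B)) / 4"
      using d2x by simp
    have pos: "(cmod b2)^2 \<le> a2 * c2" using d2 xle by simp
    have tr: "a2 + c2 = 1" unfolding a2' c2' by (simp add: field_simps)
    have dens: "density_op (mk a2 b2 c2)"
      unfolding density_op_def psd_mk trace_mk using a20 c20 pos tr by simp
    have d2': "a2 * c2 - (cmod b2)^2 = (\<tau> * p)^2 / 2"
    proof -
      have "1 - \<tau>^2 * (x^2 + 4 * B) = \<tau>^2 * (2 * p^2)" using tK K by (simp add: algebra_simps)
      then show ?thesis unfolding d2 by (simp add: power_mult_distrib)
    qed
    have wv: "wf (mk a2 b2 c2) = \<tau> * p"
    proof -
      have "wf (mk a2 b2 c2) = sqrt (2 * (a2 * c2 - (cmod b2)^2))"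
        unfolding wf_mk[OF tr] real_sqrt_mult ..
      also have "\<dots> = sqrt ((\<tau> * p)^2)" unfolding d2' by simp
      also have "\<dots> = \<tau> * p" using t0 p0 by simp
      finally show ?thesis .
    qed
    have val: "2 * (Re (trace (H ** mk a2 b2 c2)) + p * wf (mk a2 b2 c2)) - 1 = \<tau> * K"
    proof -
      have e: "2 * (a * a2 + c * c2) - 1 = \<tau> * x^2"
      proof -
        have cc: "c = 1 - a" using ac by simp
        show ?thesis unfolding a2_def c2_def x_def cc by (simp add: field_simps power2_eq_square)
      qed
      have "2 * (Re (trace (H ** mk a2 b2 c2)) + p * wf (mk a2 b2 c2)) - 1
          = (2 * (a * a2 + c * c2) - 1) + 4 * \<tau> * B + 2 * \<tau> * p^2"
        unfolding H_def tr_mk_mk wv unfolding b2_def B_def by (simp add: algebra_simps power2_eq_square)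
      also have "\<dots> = \<tau> * K" unfolding e K by (simp add: algebra_simps)
      finally show ?thesis .
    qed
    show ?thesis unfolding Let_def \<tau>_def[symmetric] sig using dens val tK2 by simp
  qed
  show "\<exists>\<sigma>. density_op \<sigma> \<and> Re (trace (H ** \<sigma>)) + p * wf \<sigma> = (1 + sqrt K)/2"
  proof (cases "K > 0")
    case True
    then show ?thesis using part2 by (metis (no_types, lifting))
  next
    case False
    then have "K = 0" using K0 by simp
    then have "x = 0" "B = 0" "p = 0" using K B0 by (simp_all add: add_nonneg_eq_0_iff)
    have B: "b = 0" using \<open>B = 0\<close> by (simp add: B_def complex_eq_iff)
    have dh: "density_op (mk (1/2) 0 (1/2))" by (simp add: density_op_def psd_mk trace_mk)
    have "Re (trace (H ** mk (1/2) 0 (1/2))) + p * wf (mk (1/2) 0 (1/2)) = (1 + sqrt K)/2"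
      unfolding H_def tr_mk_mk using ac \<open>p = 0\<close> \<open>K = 0\<close> B by (simp add: algebra_simps)
    then show ?thesis using dh by blast
  qed
qed


lemma norm_vec_le_sum: "norm (x :: 'a::real_normed_vector ^ 'n) \<le> (\<Sum>i\<in>UNIV. norm (x $ i))"
  unfolding norm_vec_def by (rule L2_set_le_sum) simp

lemma density_norm: "density_op A \<Longrightarrow> norm A \<le> 4"
proof -
  assume d: "density_op A"
  obtain a b c where s: "A = mk a b c" "a \<ge> 0" "c \<ge> 0" "(cmod b)^2 \<le> a * c" "a + c = 1"
    using density_mk[OF d] by blast
  have a1: "a \<le> 1" and c1: "c \<le> 1" using s by linarith+
  have "a * c \<le> 1" using a1 c1 s(2,3) by (simp add: mult_le_one)
  then have "(cmod b)^2 \<le> 1" using s by linarith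
  then have b1: "cmod b \<le> 1" by (simp add: abs_square_le_1)
  have "norm A \<le> (\<Sum>i\<in>UNIV. norm (A $ i))" by (rule norm_vec_le_sum)
  also have "\<dots> \<le> (\<Sum>i\<in>UNIV. (\<Sum>j\<in>UNIV. norm (A $ i $ j)))"
    by (intro sum_mono norm_vec_le_sum)
  also have "\<dots> \<le> 4" unfolding s(1) sum_2 using a1 c1 b1 s(2,3) by simp
  finally show ?thesis .
qed

lemma wf_bound: "density_op A \<Longrightarrow> norm (wf A) \<le> 1 \<and> wf A \<ge> 0"
proof -
  assume d: "density_op A"
  obtain a b c where s: "A = mk a b c" "a \<ge> 0" "c \<ge> 0" "(cmod b)^2 \<le> a * c" "a + c = 1"
    using density_mk[OF d] by blast
  have w: "wf A = sqrt (2 * (a * c - (cmod b)^2))" unfolding s(1) wf_mk[OF s(5)] real_sqrt_mult ..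
  have "(a + c)^2 - 4 * (a * c) = (a - c)^2" by (simp add: power2_eq_square algebra_simps)
  moreover have "0 \<le> (a - c)^2" by simp
  ultimately have "4 * (a * c) \<le> (a + c)^2" by linarith
  moreover have "(a + c)^2 = 1" using s by simp
  ultimately have h1: "a * c \<le> 1/4" by linarith
  have h2: "0 \<le> (cmod b)^2" by simp
  have "2 * (a * c - (cmod b)^2) = 2 * (a * c) - 2 * (cmod b)^2" by (simp add: algebra_simps)
  then have "2 * (a * c - (cmod b)^2) \<le> 1" using h1 h2 by linarith
  moreover have "0 \<le> 2 * (a * c - (cmod b)^2)" using s by simp
  ultimately show ?thesis unfolding w by simp
qed

lemma bl_adj: "bounded_linear adj"
  unfolding linear_conv_bounded_linear[symmetric]
  by (intro linearI) (simp_all add: adj_def vec_eq_iff)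

lemma bl_trace: "bounded_linear (trace :: cmat2 \<Rightarrow> complex)"
  unfolding linear_conv_bounded_linear[symmetric]
  by (intro linearI) (simp_all add: trace_def sum.distrib scaleR_sum_right)

lemma bl_trS: "bounded_linear (\<lambda>A::cmat2. Re (trace (A ** S)))"
  unfolding linear_conv_bounded_linear[symmetric]
  apply (intro linearI)
  apply (simp add: trace_def sum_2 matrix_matrix_mult_def distrib_right)
  apply (simp add: trace_def sum_2 matrix_matrix_mult_def distrib_left)
  done

lemma meas_M: "sets M = sets borel \<Longrightarrow> f \<in> borel_measurable borel \<Longrightarrow> f \<in> borel_measurable M"
  using measurable_cong_sets[of M borel borel borel] by simp


theorem corollary1:
  fixes M :: "cmat2 measure"
  assumes "prob_space M"
    and "sets M = sets borel"
    and "AE \<rho> in M. density_op \<rho>"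
  defines "\<rho>hat \<equiv> integral\<^sup>L M (\<lambda>\<rho>. \<rho>)"
    and "p \<equiv> integral\<^sup>L M (\<lambda>\<rho>. sqrt (1 - Re (trace (\<rho> ** \<rho>))))"
  defines "V \<equiv> (1 + sqrt (2 * (p\<^sup>2 + Re (trace (\<rho>hat ** \<rho>hat))) - 1)) / 2"
  shows "(\<forall>\<sigma>. density_op \<sigma> \<longrightarrow> integral\<^sup>L M (\<lambda>\<rho>. fidelity \<rho> \<sigma>) \<le> V)
       \<and> (\<exists>\<sigma>. density_op \<sigma> \<and> integral\<^sup>L M (\<lambda>\<rho>. fidelity \<rho> \<sigma>) = V)
       \<and> (2 * (p\<^sup>2 + Re (trace (\<rho>hat ** \<rho>hat))) - 1 > 0 \<longrightarrow>
            (let \<sigma>s = (1/2) *\<^sub>R mat 1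
                     + sqrt (1 / (2 * (p\<^sup>2 + Re (trace (\<rho>hat ** \<rho>hat))) - 1))
                       *\<^sub>R (\<rho>hat - (1/2) *\<^sub>R mat 1)
             in density_op \<sigma>s \<and> integral\<^sup>L M (\<lambda>\<rho>. fidelity \<rho> \<sigma>s) = V))"
proof -
  interpret prob_space M by fact
  have sM: "sets M = sets borel" by fact
  have AEd: "AE \<rho> in M. density_op \<rho>" by fact
  have int_id: "integrable M (\<lambda>\<rho>::cmat2. \<rho>)"
  proof (rule integrable_const_bound[where B=4])
    show "AE x in M. norm x \<le> 4" using AEd by eventually_elim (rule density_norm)
    show "(\<lambda>\<rho>::cmat2. \<rho>) \<in> borel_measurable M" by (rule meas_M[OF sM]) simp
  qed
  have wf_M: "wf \<in> borel_measurable M" by (rule meas_M[OF sM wf_meas])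
  have int_wf: "integrable M wf"
  proof (rule integrable_const_bound[where B=1])
    show "AE x in M. norm (wf x) \<le> 1" using AEd by eventually_elim (use wf_bound in blast)
  qed (rule wf_M)
  have p_eq: "p = integral\<^sup>L M wf" unfolding p_def wf_def ..
  have p0: "p \<ge> 0" unfolding p_eq
    by (rule integral_nonneg_AE) (use AEd in \<open>eventually_elim, use wf_bound in blast\<close>)
  have herm: "hermitian \<rho>hat"
  proof -
    have "adj \<rho>hat = integral\<^sup>L M (\<lambda>\<rho>. adj \<rho>)"
      unfolding \<rho>hat_def by (rule integral_bounded_linear[OF bl_adj int_id, symmetric])
    also have "\<dots> = integral\<^sup>L M (\<lambda>\<rho>. \<rho>)"
    proof (rule integral_cong_AE)
      show "adj \<in> borel_measurable M"
        by (rule meas_M[OF sM]) (intro borel_measurable_continuous_onI linear_continuous_on bl_adj)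
      show "(\<lambda>\<rho>::cmat2. \<rho>) \<in> borel_measurable M" by (rule meas_M[OF sM]) simp
      show "AE x in M. adj x = x" using AEd
        by eventually_elim (simp add: density_op_def psd_def hermitian_def)
    qed
    finally show ?thesis unfolding hermitian_def \<rho>hat_def .
  qed
  have tr1: "trace \<rho>hat = 1"
  proof -
    have "trace \<rho>hat = integral\<^sup>L M (\<lambda>\<rho>. trace \<rho>)"
      unfolding \<rho>hat_def by (rule integral_bounded_linear[OF bl_trace int_id, symmetric])
    also have "\<dots> = integral\<^sup>L M (\<lambda>\<rho>. 1)"
    proof (rule integral_cong_AE)
      show "(trace :: cmat2 \<Rightarrow> complex) \<in> borel_measurable M"
        by (rule meas_M[OF sM]) (intro borel_measurable_continuous_onI linear_continuous_on bl_trace)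
      show "(\<lambda>\<rho>::cmat2. 1::complex) \<in> borel_measurable M" by simp
      show "AE x in M. trace x = 1" using AEd
        by eventually_elim (simp add: density_op_def)
    qed
    also have "\<dots> = 1" using prob_space by simp
    finally show ?thesis .
  qed
  define a where "a = Re (\<rho>hat $ 1 $ 1)"
  define b where "b = \<rho>hat $ 1 $ 2"
  define c where "c = Re (\<rho>hat $ 2 $ 2)"
  have Hm: "\<rho>hat = mk a b c" unfolding a_def b_def c_def by (rule hermitian_mk[OF herm])
  have ac: "a + c = 1" using tr1 unfolding Hm trace_mk by (simp add: complex_eq_iff)
  have EF: "integral\<^sup>L M (\<lambda>\<rho>. fidelity \<rho> \<sigma>) = Re (trace (\<rho>hat ** \<sigma>)) + p * wf \<sigma>"
    if ds: "density_op \<sigma>" for \<sigma>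
  proof -
    have tr_M: "(\<lambda>\<rho>::cmat2. Re (trace (\<rho> ** \<sigma>))) \<in> borel_measurable M"
      by (rule meas_M[OF sM trlin_meas])
    have "integral\<^sup>L M (\<lambda>\<rho>. fidelity \<rho> \<sigma>) = integral\<^sup>L M (\<lambda>\<rho>. Re (trace (\<rho> ** \<sigma>)) + wf \<rho> * wf \<sigma>)"
    proof (rule integral_cong_AE)
      show "(\<lambda>\<rho>. fidelity \<rho> \<sigma>) \<in> borel_measurable M" by (rule meas_M[OF sM fid_meas])
      show "(\<lambda>\<rho>. Re (trace (\<rho> ** \<sigma>)) + wf \<rho> * wf \<sigma>) \<in> borel_measurable M"
        using tr_M wf_M by measurable
      show "AE \<rho> in M. fidelity \<rho> \<sigma> = Re (trace (\<rho> ** \<sigma>)) + wf \<rho> * wf \<sigma>"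
        using AEd by eventually_elim (rule fid_formula[OF _ ds])
    qed
    also have "\<dots> = integral\<^sup>L M (\<lambda>\<rho>. Re (trace (\<rho> ** \<sigma>))) + integral\<^sup>L M (\<lambda>\<rho>. wf \<rho> * wf \<sigma>)"
      by (rule Bochner_Integration.integral_add) (auto intro: integrable_bounded_linear[OF bl_trS int_id] int_wf)
    also have "integral\<^sup>L M (\<lambda>\<rho>. Re (trace (\<rho> ** \<sigma>))) = Re (trace (\<rho>hat ** \<sigma>))"
      unfolding \<rho>hat_def by (rule integral_bounded_linear[OF bl_trS int_id])
    also have "integral\<^sup>L M (\<lambda>\<rho>. wf \<rho> * wf \<sigma>) = p * wf \<sigma>"
      unfolding p_eq by (rule Bochner_Integration.integral_mult_left) (rule int_wf)
    finally show ?thesis .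
  qed
  note FA = final_alg[OF ac p0, where b = b]
  show ?thesis
  proof (intro conjI)
    show "\<forall>\<sigma>. density_op \<sigma> \<longrightarrow> integral\<^sup>L M (\<lambda>\<rho>. fidelity \<rho> \<sigma>) \<le> V"
      using FA(1) EF unfolding V_def Hm by auto
    show "\<exists>\<sigma>. density_op \<sigma> \<and> integral\<^sup>L M (\<lambda>\<rho>. fidelity \<rho> \<sigma>) = V"
      using FA(3) EF unfolding V_def Hm by metis
    show "2 * (p\<^sup>2 + Re (trace (\<rho>hat ** \<rho>hat))) - 1 > 0 \<longrightarrow>
            (let \<sigma>s = (1/2) *\<^sub>R mat 1
                     + sqrt (1 / (2 * (p\<^sup>2 + Re (trace (\<rho>hat ** \<rho>hat))) - 1))
                       *\<^sub>R (\<rho>hat - (1/2) *\<^sub>R mat 1)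
             in density_op \<sigma>s \<and> integral\<^sup>L M (\<lambda>\<rho>. fidelity \<rho> \<sigma>s) = V)"
      using FA(2) EF unfolding V_def Hm Let_def by auto
  qed
qed

end
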